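(* Let $K\ge 1$, $N\ge1$, and for $k\in\{0,1,\dots,K\}$ let $\bm{H}_k\colon\mathbb{R}^{d_k}\to\mathbb{R}^{N\times E_k}$ be differentiable maps, and let $\Phi\colon\mathbb{R}^{N\times E}\to\mathbb{R}$, $E=\sum_{k=0}^K E_k$, be differentiable. Put $\bm{x}=(\bm{x}_0,\dots,\bm{x}_K)$ and $f(\bm{x})=\Phi(\bm{H}_0(\bm{x}_0),\bm{H}_1(\bm{x}_1),\dots,\bm{H}_K(\bm{x}_K))$. Assume $\Phi$ is $L$-smooth, i.e. $\lVert\nabla\Phi(\bm{U})-\nabla\Phi(\bm{V})\rVert\le L\lVert\bm{U}-\bm{V}\rVert$ for all $\bm{U},\bm{V}$, and that each $\bm{H}_k$ has bounded derivative, i.e. $\lVert\nabla\bm{H}_k(\bm{x}_k)\rVert\le H$ for all $\bm{x}_k$ and all $k\in\{0,\dots,K\}$. Let $\{\bm{x}^t\}$ and $\{\bm{G}^t_k\}$ be the iterates and surrogates generated by the EF-VFL algorithm described in the context, and let $\bm{g}^t=(\bm{g}^t_0,\dots,\bm{g}^t_K)$ and $D^{(t)}$ be as defined there. Then for all $t\ge0$, $$\lVert \bm{g}^{t}-\nabla f(\bm{x}^{t})\rVert^2\le K H^2L^2 D^{(t)}.$$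
   Context: Norms of matrices are Frobenius norms, and the norm of the third-order tensor $\nabla\bm{H}_k(\bm{x}_k)$ is its Euclidean (Frobenius) norm; $\nabla_k$ denotes the partial derivative with respect to the $k$-th block of arguments. A contractive compressor is a (possibly random) map $\mathcal{C}$ with $\mathbb{E}\lVert\mathcal{C}(\bm{v})-\bm{v}\rVert^2\le(1-\alpha)\lVert\bm{v}\rVert^2$ for all $\bm{v}$, for some $\alpha\in(0,1]$, with independent randomness at each application. EF-VFL: surrogates are initialized $\bm{G}^0_k=\mathcal{C}(\bm{H}_k(\bm{x}^0_k))$, $k=0,\dots,K$; at each $t$, $\bm{x}^{t+1}=\bm{x}^t-\eta\tilde{\bm{g}}^t$ and $\bm{G}^{t+1}_k=\bm{G}^t_k+\mathcal{C}(\bm{H}_k(\bm{x}^{t+1}_k)-\bm{G}^t_k)$ for $k=0,\dots,K$. The full surrogate gradient has blocks $\bm{g}^t_k=\sum_{i=1}^N\sum_{j=1}^{E_k}[\tilde\nabla^t_k\Phi]_{ij}[\nabla\bm{H}_k(\bm{x}^t_k)]_{ij:}$ where $\tilde\nabla^t_k\Phi=\nabla_k\Phi(\bm{G}^t_0,\dots,\bm{G}^t_{k-1},\bm{H}_k(\bm{x}^t_k),\bm{G}^t_{k+1},\dots,\bm{G}^t_K)$; $\tilde{\bm{g}}^t$ is its mini-batch analogue computed from the same formula with $\Phi$ replaced by the mini-batch objective on a sampled batch $\mathcal{B}^t\subseteq[N]$ of size $B$ and only the corresponding rows of $\bm{H}_k,\bm{G}_k$. The total distortion is $D^{(t)}=\sum_{k=0}^K\lVert\bm{G}^t_k-\bm{H}_k(\bm{x}^t_k)\rVert^2$.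 *)

theory Defs
  imports "HOL-Analysis.Analysis"
begin

text \<open>All parameter coordinates live in one index type 'd, partitioned into
blocks by pb (block of coordinate j is pb j); matrix columns live in 'e, partitioned
into blocks by cb; rows are indexed by 'n (N = CARD('n)). A block map
H_k : R^{d_k} -> R^{N x E_k} is encoded as a map real^'d -> real^'e^'n depending only on
block-k coordinates and vanishing outside the block-k columns (zero padding).\<close>

definition mask :: "('e::finite \<Rightarrow> nat) \<Rightarrow> nat \<Rightarrow> real^'e^'n::finite \<Rightarrow> real^'e^'n" where
  "mask cb k A = (\<chi> i c. if cb c = k then A $ i $ c else 0)"

text \<open>Frobenius (Hilbert-Schmidt) norm of the Jacobian tensor of a linear map D,
i.e. the square root of the sum of squares of all partial derivatives.\<close>
definition hs_norm :: "(real^'d::finite \<Rightarrow> 'b::real_normed_vector) \<Rightarrow> real" where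
  "hs_norm D = sqrt (\<Sum>j\<in>UNIV. (norm (D (axis j 1)))\<^sup>2)"

text \<open>Surrogate gradient: block k of the result is
  sum over rows i in R and block-k columns c of
  [grad Phi (G_0,..,G_{k-1},H_k(x_k),G_{k+1},..,G_K)]_{ic} * [grad H_k(x_k)]_{ic:}.\<close>
definition sgrad ::
  "nat \<Rightarrow> ('d::finite \<Rightarrow> nat) \<Rightarrow> ('e::finite \<Rightarrow> nat)
   \<Rightarrow> (nat \<Rightarrow> real^'d \<Rightarrow> real^'e^'n::finite)
   \<Rightarrow> (nat \<Rightarrow> real^'d \<Rightarrow> real^'d \<Rightarrow> real^'e^'n)
   \<Rightarrow> (real^'e^'n \<Rightarrow> real^'e^'n) \<Rightarrow> 'n set \<Rightarrow> (nat \<Rightarrow> real^'e^'n) \<Rightarrow> real^'d \<Rightarrow> real^'d" where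
  "sgrad K pb cb H DH gP R G x =
     (\<chi> j. (let k = pb j;
                A = H k x + (\<Sum>l\<in>{0..K} - {k}. G l)
            in \<Sum>i\<in>R. \<Sum>c\<in>{c. cb c = k}. gP A $ i $ c * DH k x (axis j 1) $ i $ c))"

end

theory Submission
  imports Defs
begin


lemma deriv_offblock:
  fixes F :: "real^'d::finite \<Rightarrow> 'b::real_normed_vector" and pb :: "'d \<Rightarrow> nat"
  assumes loc: "\<forall>y z. (\<forall>j. pb j = k \<longrightarrow> y $ j = z $ j) \<longrightarrow> F y = F z"
    and der: "\<forall>y. (F has_derivative DF y) (at y)"
    and nj: "pb j \<noteq> k"
  shows "DF y (axis j 1) = 0"
proof -
  define P where "P = (\<lambda>y::real^'d. \<chi> i. if pb i = k then y$i else 0)"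
  have lin: "linear P" unfolding P_def by (auto simp: linear_iff vec_eq_iff)
  have FP: "(\<lambda>y. F (P y)) = F" using loc by (auto simp: P_def)
  have "((\<lambda>y. F (P y)) has_derivative (\<lambda>h. DF (P y) (P h))) (at y)"
    using has_derivative_compose[OF linear_imp_has_derivative[OF lin] der[rule_format]] .
  then have "(F has_derivative (\<lambda>h. DF (P y) (P h))) (at y)" by (simp add: FP)
  then have "DF y = (\<lambda>h. DF (P y) (P h))" using der has_derivative_unique by blast
  moreover have "P (axis j 1) = 0" using nj by (simp add: P_def axis_def vec_eq_iff)
  moreover have "DF (P y) 0 = 0"
    using der has_derivative_bounded_linear bounded_linear.linear linear_0 by blast
  ultimately show ?thesis by simp
qed

lemma deriv_col:
  fixes F :: "real^'d::finite \<Rightarrow> real^'e::finite^'n::finite"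
  assumes z: "\<forall>y. F y $ i $ c = 0" and der: "(F has_derivative F') (at y)"
  shows "F' h $ i $ c = 0"
proof -
  have "((\<lambda>y. F y $ i $ c) has_derivative (\<lambda>h. F' h $ i $ c)) (at y)"
    using bounded_linear.has_derivative[OF bounded_linear_vec_nth
        bounded_linear.has_derivative[OF bounded_linear_vec_nth der]] .
  moreover have "((\<lambda>y. F y $ i $ c) has_derivative (\<lambda>h. 0)) (at y)"
    using z by simp
  ultimately have "(\<lambda>h. F' h $ i $ c) = (\<lambda>h. 0)" using has_derivative_unique by blast
  then show ?thesis by metis
qed

lemma inner_mat: "(A::real^'e::finite^'n::finite) \<bullet> B = (\<Sum>i\<in>UNIV. \<Sum>c\<in>UNIV. A$i$c * B$i$c)"
  by (simp add: inner_vec_def)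

lemma pyth_blocks:
  fixes v :: "nat \<Rightarrow> real^'e::finite^'n::finite"
  assumes "finite S" "\<forall>l\<in>S. \<forall>i c. cb c \<noteq> l \<longrightarrow> v l $ i $ c = 0"
  shows "(norm (sum v S))\<^sup>2 = (\<Sum>l\<in>S. (norm (v l))\<^sup>2)"
proof (rule norm_sum_Pythagorean[OF assms(1)])
  show "pairwise (\<lambda>i j. orthogonal (v i) (v j)) S"
    unfolding pairwise_def orthogonal_def inner_mat
  proof (intro ballI impI sum.neutral)
    fix l m i c assume "l \<in> S" "m \<in> S" "l \<noteq> m"
    then show "v l $ i $ c * v m $ i $ c = 0"
      using assms(2) by (metis mult_zero_left mult_zero_right)
  qed
qed

theorem lemma1:
  fixes K :: nat
    and pb :: "'d::finite \<Rightarrow> nat"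
    and cb :: "'e::finite \<Rightarrow> nat"
    and H :: "nat \<Rightarrow> real^'d \<Rightarrow> real^'e^'n::finite"
    and DH :: "nat \<Rightarrow> real^'d \<Rightarrow> real^'d \<Rightarrow> real^'e^'n"
    and Phi :: "real^'e^'n \<Rightarrow> real"
    and gPhi :: "real^'e^'n \<Rightarrow> real^'e^'n"
    and PhiB :: "'n set \<Rightarrow> real^'e^'n \<Rightarrow> real"
    and gPhiB :: "'n set \<Rightarrow> real^'e^'n \<Rightarrow> real^'e^'n"
    and Bs :: "nat \<Rightarrow> 'n set"
    and Bsz :: nat
    and Cr :: "nat \<Rightarrow> nat \<Rightarrow> real^'e^'n \<Rightarrow> real^'e^'n"
    and eta L Hb :: real
    and x :: "nat \<Rightarrow> real^'d"
    and G :: "nat \<Rightarrow> nat \<Rightarrow> real^'e^'n"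
    and t :: nat
  assumes K_ge: "K \<ge> 1"
    and pb_range: "\<forall>j. pb j \<le> K"
    and cb_range: "\<forall>c. cb c \<le> K"
    and H_local: "\<forall>k\<le>K. \<forall>y z. (\<forall>j. pb j = k \<longrightarrow> y $ j = z $ j) \<longrightarrow> H k y = H k z"
    and H_cols: "\<forall>k\<le>K. \<forall>y i c. cb c \<noteq> k \<longrightarrow> H k y $ i $ c = 0"
    and H_diff: "\<forall>k\<le>K. \<forall>y. (H k has_derivative DH k y) (at y)"
    and H_bound: "\<forall>k\<le>K. \<forall>y. hs_norm (DH k y) \<le> Hb"
    and Phi_grad: "\<forall>U. GDERIV Phi U :> gPhi U"
    and Phi_smooth: "\<forall>U V. norm (gPhi U - gPhi V) \<le> L * norm (U - V)"
    and PhiB_rows: "\<forall>S U V. (\<forall>i\<in>S. U $ i = V $ i) \<longrightarrow> PhiB S U = PhiB S V"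
    and PhiB_grad: "\<forall>S U. GDERIV (PhiB S) U :> gPhiB S U"
    and batch: "\<forall>s. card (Bs s) = Bsz"
    and G_init: "\<forall>k\<le>K. G 0 k = mask cb k (Cr 0 k (H k (x 0)))"
    and x_step: "\<forall>s. x (Suc s) = x s - eta *\<^sub>R sgrad K pb cb H DH (gPhiB (Bs s)) (Bs s) (G s) (x s)"
    and G_step: "\<forall>s. \<forall>k\<le>K. G (Suc s) k = G s k + mask cb k (Cr (Suc s) k (H k (x (Suc s)) - G s k))"
  shows "(\<exists>D. GDERIV (\<lambda>y. Phi (\<Sum>k\<le>K. H k y)) (x t) :> D) \<and>
         (\<forall>D. GDERIV (\<lambda>y. Phi (\<Sum>k\<le>K. H k y)) (x t) :> D \<longrightarrow>
            (norm (sgrad K pb cb H DH gPhi UNIV (G t) (x t) - D))\<^sup>2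
              \<le> real K * Hb\<^sup>2 * L\<^sup>2 * (\<Sum>k\<le>K. (norm (G t k - H k (x t)))\<^sup>2))"
proof -
  define xt where "xt = x t"
  define U where "U = (\<Sum>k\<le>K. H k xt)"
  define T where "T = (\<lambda>h. (\<Sum>k\<le>K. DH k xt h) \<bullet> gPhi U)"
  define D0 where "D0 = (\<chi> j. T (axis j 1))"
  have sder: "((\<lambda>y. \<Sum>k\<le>K. H k y) has_derivative (\<lambda>h. \<Sum>k\<le>K. DH k xt h)) (at xt)"
    using H_diff by (intro has_derivative_sum) auto
  have pder: "(Phi has_derivative (\<lambda>h. h \<bullet> gPhi U)) (at U)"
    using Phi_grad by (simp add: gderiv_def)
  have fder: "((\<lambda>y. Phi (\<Sum>k\<le>K. H k y)) has_derivative T) (at xt)"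
    unfolding T_def using has_derivative_compose[OF sder, of Phi] pder by (simp add: U_def)
  have linT: "linear T" using fder has_derivative_bounded_linear bounded_linear.linear by blast
  have TD0: "T = (\<lambda>h. h \<bullet> D0)"
  proof
    fix h :: "real^'d"
    have "T h = T (\<Sum>j\<in>UNIV. h$j *\<^sub>R axis j 1)"
      using basis_expansion[of h] by (simp add: scalar_mult_eq_scaleR)
    also have "\<dots> = (\<Sum>j\<in>UNIV. h$j * T (axis j 1))"
      using linT by (simp add: linear_sum linear_scale)
    also have "\<dots> = h \<bullet> D0" by (simp add: D0_def inner_vec_def)
    finally show "T h = h \<bullet> D0" .
  qed
  have ex: "GDERIV (\<lambda>y. Phi (\<Sum>k\<le>K. H k y)) (x t) :> D0"
    using fder TD0 by (simp add: gderiv_def xt_def)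
  have uniq: "D = D0" if "GDERIV (\<lambda>y. Phi (\<Sum>k\<le>K. H k y)) (x t) :> D" for D
  proof -
    have "(\<lambda>h. h \<bullet> D) = T"
      using that fder has_derivative_unique unfolding gderiv_def xt_def by blast
    then have "\<forall>h. h \<bullet> D = h \<bullet> D0" using TD0 by metis
    then show ?thesis by (metis inner_axis' vec_eq_iff inner_real_def mult_1)
  qed
  have DH_off: "DH k xt (axis j 1) = 0" if "k \<le> K" "pb j \<noteq> k" for k j
    using deriv_offblock[of pb k "H k" "DH k" j xt] H_local H_diff that by auto
  have DH_col: "DH k xt h $ i $ c = 0" if "k \<le> K" "cb c \<noteq> k" for k h i c
    using deriv_col[of "H k" i c "DH k xt" xt h] H_cols H_diff that by auto
  have G_col: "\<forall>k\<le>K. \<forall>i c. cb c \<noteq> k \<longrightarrow> G s k $ i $ c = 0" for s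
  proof (induction s)
    case 0 then show ?case using G_init by (simp add: mask_def)
  next
    case (Suc s) then show ?case using G_step by (simp add: mask_def)
  qed
  define A where "A k = H k xt + (\<Sum>l\<in>{0..K}-{k}. G t l)" for k
  define V where "V j = DH (pb j) xt (axis j 1)" for j
  define Dl where "Dl k = gPhi (A k) - gPhi U" for k
  define d where "d l = (norm (G t l - H l xt))\<^sup>2" for l
  define sg where "sg = sgrad K pb cb H DH gPhi UNIV (G t) xt"
  have Tj: "T (axis j 1) = V j \<bullet> gPhi U" for j
  proof -
    have "(\<Sum>k\<le>K. DH k xt (axis j 1)) = DH (pb j) xt (axis j 1) + (\<Sum>k\<in>{..K}-{pb j}. DH k xt (axis j 1))"
      using sum.remove[of "{..K}" "pb j"] pb_range by auto
    also have "(\<Sum>k\<in>{..K}-{pb j}. DH k xt (axis j 1)) = 0"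
      using DH_off by (intro sum.neutral) auto
    finally show ?thesis by (simp add: T_def V_def)
  qed
  have Sj: "sg $ j = gPhi (A (pb j)) \<bullet> V j" for j
  proof -
    have "sg $ j = (\<Sum>i\<in>UNIV. \<Sum>c\<in>{c. cb c = pb j}. gPhi (A (pb j)) $ i $ c * V j $ i $ c)"
      by (simp add: sg_def sgrad_def Let_def A_def V_def)
    also have "\<dots> = (\<Sum>i\<in>UNIV. \<Sum>c\<in>UNIV. gPhi (A (pb j)) $ i $ c * V j $ i $ c)"
    using DH_col pb_range by (intro sum.cong refl sum.mono_neutral_left) (auto simp: V_def)
    finally show ?thesis by (simp add: inner_mat)
  qed
  have dj: "(sg - D0) $ j = Dl (pb j) \<bullet> V j" for j
    using Sj Tj by (simp add: D0_def Dl_def inner_diff_left inner_diff_right inner_commute)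
  have Hb2: "(\<Sum>j\<in>{j. pb j = k}. (norm (DH k xt (axis j 1)))\<^sup>2) \<le> Hb\<^sup>2" if "k \<le> K" for k
  proof -
    have "(\<Sum>j\<in>{j. pb j = k}. (norm (DH k xt (axis j 1)))\<^sup>2) \<le> (\<Sum>j\<in>UNIV. (norm (DH k xt (axis j 1)))\<^sup>2)"
      by (intro sum_mono2) auto
    also have "\<dots> = (hs_norm (DH k xt))\<^sup>2" by (simp add: hs_norm_def sum_nonneg)
    also have "\<dots> \<le> Hb\<^sup>2"
      using H_bound that by (intro power_mono) (auto simp: hs_norm_def sum_nonneg)
    finally show ?thesis .
  qed
  have Dbound: "(norm (Dl k))\<^sup>2 \<le> L\<^sup>2 * (\<Sum>l\<in>{..K}-{k}. d l)" if "k \<le> K" for k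
  proof -
    have U_split: "U = H k xt + (\<Sum>l\<in>{..K}-{k}. H l xt)"
      unfolding U_def using sum.remove[of "{..K}" k] that by auto
    have AU: "A k - U = (\<Sum>l\<in>{..K}-{k}. G t l - H l xt)"
      by (simp add: A_def U_split atLeast0AtMost sum_subtractf)
    have "(norm (Dl k))\<^sup>2 \<le> (L * norm (A k - U))\<^sup>2"
      unfolding Dl_def using Phi_smooth by (intro power_mono) auto
    also have "\<dots> = L\<^sup>2 * (norm (A k - U))\<^sup>2" by (simp add: power_mult_distrib)
    also have "(norm (A k - U))\<^sup>2 = (\<Sum>l\<in>{..K}-{k}. d l)"
      unfolding AU d_def
      by (rule pyth_blocks[where cb=cb]) (use G_col H_cols in auto)
    finally show ?thesis .
  qed
  have "(norm (sg - D0))\<^sup>2 = (\<Sum>j\<in>UNIV. ((sg - D0) $ j)\<^sup>2)"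
    unfolding power2_norm_eq_inner inner_vec_def inner_real_def by (simp add: power2_eq_square)
  also have "\<dots> \<le> (\<Sum>j\<in>UNIV. (norm (Dl (pb j)))\<^sup>2 * (norm (V j))\<^sup>2)"
  proof (rule sum_mono)
    fix j
    show "((sg - D0) $ j)\<^sup>2 \<le> (norm (Dl (pb j)))\<^sup>2 * (norm (V j))\<^sup>2"
      unfolding dj power2_norm_eq_inner by (rule Cauchy_Schwarz_ineq)
  qed
  also have "\<dots> = (\<Sum>k\<le>K. \<Sum>j\<in>{j. pb j = k}. (norm (Dl k))\<^sup>2 * (norm (DH k xt (axis j 1)))\<^sup>2)"
  proof -
    have "(\<Sum>j\<in>UNIV. (norm (Dl (pb j)))\<^sup>2 * (norm (V j))\<^sup>2)
        = (\<Sum>k\<le>K. \<Sum>j\<in>{j \<in> UNIV. pb j = k}. (norm (Dl (pb j)))\<^sup>2 * (norm (V j))\<^sup>2)"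
      using pb_range by (intro sum.group[symmetric]) auto
    also have "\<dots> = (\<Sum>k\<le>K. \<Sum>j\<in>{j. pb j = k}. (norm (Dl k))\<^sup>2 * (norm (DH k xt (axis j 1)))\<^sup>2)"
      by (intro sum.cong refl) (auto simp: V_def)
    finally show ?thesis .
  qed
  also have "\<dots> \<le> (\<Sum>k\<le>K. (norm (Dl k))\<^sup>2 * Hb\<^sup>2)"
  proof (rule sum_mono)
    fix k assume "k \<in> {..K}"
    then show "(\<Sum>j\<in>{j. pb j = k}. (norm (Dl k))\<^sup>2 * (norm (DH k xt (axis j 1)))\<^sup>2) \<le> (norm (Dl k))\<^sup>2 * Hb\<^sup>2"
      using Hb2[of k] by (simp add: sum_distrib_left[symmetric] mult_left_mono)
  qed
  also have "\<dots> \<le> (\<Sum>k\<le>K. (L\<^sup>2 * (\<Sum>l\<in>{..K}-{k}. d l)) * Hb\<^sup>2)"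
    using Dbound by (intro sum_mono mult_right_mono) auto
  also have "\<dots> = real K * Hb\<^sup>2 * L\<^sup>2 * (\<Sum>k\<le>K. d k)"
  proof -
    have "(\<Sum>k\<le>K. (L\<^sup>2 * (\<Sum>l\<in>{..K}-{k}. d l)) * Hb\<^sup>2)
        = L\<^sup>2 * Hb\<^sup>2 * (\<Sum>k\<le>K. (\<Sum>l\<le>K. d l) - d k)"
      by (simp add: sum_diff1 sum_distrib_left sum_distrib_right algebra_simps)
    also have "(\<Sum>k\<le>K. (\<Sum>l\<le>K. d l) - d k) = real K * (\<Sum>l\<le>K. d l)"
      by (simp add: sum_subtractf algebra_simps)
    finally show ?thesis by simp
  qed
  finally have main: "(norm (sg - D0))\<^sup>2 \<le> real K * Hb\<^sup>2 * L\<^sup>2 * (\<Sum>k\<le>K. d k)" .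
  show ?thesis
  proof
    show "\<exists>D. GDERIV (\<lambda>y. Phi (\<Sum>k\<le>K. H k y)) (x t) :> D" using ex by blast
  next
    show "\<forall>D. GDERIV (\<lambda>y. Phi (\<Sum>k\<le>K. H k y)) (x t) :> D \<longrightarrow>
            (norm (sgrad K pb cb H DH gPhi UNIV (G t) (x t) - D))\<^sup>2
              \<le> real K * Hb\<^sup>2 * L\<^sup>2 * (\<Sum>k\<le>K. (norm (G t k - H k (x t)))\<^sup>2)"
    proof (intro allI impI)
      fix D assume "GDERIV (\<lambda>y. Phi (\<Sum>k\<le>K. H k y)) (x t) :> D"
      then have "D = D0" by (rule uniq)
      then show "(norm (sgrad K pb cb H DH gPhi UNIV (G t) (x t) - D))\<^sup>2
              \<le> real K * Hb\<^sup>2 * L\<^sup>2 * (\<Sum>k\<le>K. (norm (G t k - H k (x t)))\<^sup>2)"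
        using main by (simp only: sg_def d_def xt_def)
    qed
  qed
qed

end
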